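(* Let $\underline{p}_g\le \bar{p}_g$, $p_{g0}\in\mathbb{R}$, and $\alpha_g\neq 0$ be real constants. For $\Delta\in\mathbb{R}$ define \[ p_{gk}(\Delta):=\mathrm{proj}_{[\underline{p}_g,\bar{p}_g]}(p_{g0}+\alpha_g\Delta),\qquad \tilde{p}_{gk}(\Delta):=\min\{\bar{p}_g,\,p_{g0}+\alpha_g\Delta\}, \] and for $\epsilon>0$ define \[ p_{gk}^\epsilon(\Delta):=\underline{p}_g+\epsilon\ln\left[1+\frac{\exp[(\bar{p}_g-\underline{p}_g)/\epsilon]}{1+\exp[(\bar{p}_g-p_{g0}-\alpha_g\Delta)/\epsilon]}\right],\qquad \tilde{p}_{gk}^{\epsilon}(\Delta):=\bar{p}_g-\epsilon\ln\left[1+\exp\left(\frac{\bar{p}_g-p_{g0}-\alpha_g\Delta}{\epsilon}\right)\right]. \] Then, as $\epsilon\to 0$, \[ \sup\left\{|p_{gk}^\epsilon(\Delta)-p_{gk}(\Delta)|:\Delta\in\mathbb{R}\right\}\to 0 \quad\text{and}\quad \sup\left\{|\tilde{p}_{gk}^{\epsilon}(\Delta)-\tilde{p}_{gk}(\Delta)|:\Delta\ge (\underline{p}_g-p_{g0})/\alpha_g\right\}\to 0. \]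
   Context: $\mathrm{proj}_{[a,b]}(x)=\max\{a,\min\{b,x\}\}$ denotes projection onto the interval $[a,b]$. In the application, $p_{gk}(\Delta)$ models the active power output of generator $g$ in contingency $k$ as a function of the system-wide imbalance $\Delta$, with base-case output $p_{g0}$, bounds $\underline{p}_g,\bar{p}_g$, and participation factor $\alpha_g$. *)

theory Defs
  imports Complex_Main
begin

definition proj :: "real \<Rightarrow> real \<Rightarrow> real \<Rightarrow> real" where
  "proj a b x = max a (min b x)"

end

theory Submission imports Defs begin

lemma sp_bounds: "max 0 (t::real) \<le> ln (1 + exp t) \<and> ln (1 + exp t) \<le> max 0 t + ln 2"
proof -
  have "ln (exp t) \<le> ln (1 + exp t)" by (subst ln_le_cancel_iff) (auto simp: add_pos_pos)
  then have "t \<le> ln (1 + exp t)" by simp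
  moreover have "0 \<le> ln (1 + exp t)" by (simp add: add_pos_pos)
  moreover have "1 + exp t \<le> 2 * exp (max 0 t)"
    by (cases "t \<le> 0") (auto simp: max_def)
  then have "ln (1 + exp t) \<le> ln (2 * exp (max 0 t))" by (simp add: add_pos_pos)
  then have "ln (1 + exp t) \<le> max 0 t + ln 2" by (simp add: ln_mult)
  ultimately show ?thesis by simp
qed

lemma sp_scaled:
  fixes e y :: real
  assumes "e > 0"
  shows "max 0 y \<le> e * ln (1 + exp (y / e)) \<and> e * ln (1 + exp (y / e)) \<le> max 0 y + e * ln 2"
proof -
  have b: "max 0 (y/e) \<le> ln (1 + exp (y/e))" "ln (1 + exp (y/e)) \<le> max 0 (y/e) + ln 2"
    using sp_bounds[of "y/e"] by auto
  have m: "e * max 0 (y/e) = max 0 y" using assms by (auto simp: max_def zero_le_divide_iff)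
  have "e * max 0 (y/e) \<le> e * ln (1 + exp (y/e))" using b(1) assms by (simp add: mult_left_mono)
  moreover have "e * ln (1 + exp (y/e)) \<le> e * (max 0 (y/e) + ln 2)" using b(2) assms by (simp add: mult_left_mono)
  ultimately show ?thesis using m by (simp add: distrib_left)
qed

lemma bound1:
  fixes a b e x :: real
  assumes "e > 0"
  shows "\<bar>a + e * ln (1 + exp ((b - a) / e) / (1 + exp ((b - x) / e))) - max a (min b x)\<bar> \<le> e * ln 2"
proof -
  define L1 where "L1 = ln (1 + exp ((b - x) / e))"
  have F: "exp ((b - a) / e) / (1 + exp ((b - x) / e)) = exp (((b - a) - e * L1) / e)"
  proof -
    have "((b - a) - e * L1) / e = (b - a) / e - L1" using assms by (simp add: field_simps)
    moreover have "exp L1 = 1 + exp ((b - x) / e)" unfolding L1_def by (simp add: add_pos_pos)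
    ultimately show ?thesis by (simp add: exp_diff)
  qed
  have B1: "max 0 (b - x) \<le> e * L1" "e * L1 \<le> max 0 (b - x) + e * ln 2"
    using sp_scaled[OF assms, of "b - x"] unfolding L1_def by auto
  have B2: "max 0 ((b - a) - e * L1) \<le> e * ln (1 + exp (((b - a) - e * L1) / e))"
    "e * ln (1 + exp (((b - a) - e * L1) / e)) \<le> max 0 ((b - a) - e * L1) + e * ln 2"
    using sp_scaled[OF assms, of "(b - a) - e * L1"] by auto
  define M where "M = max 0 (b - x)"
  define z where "z = (b - a) - e * L1"
  have e0: "0 \<le> e * ln 2" using assms by simp
  have z1: "b - a - M - e * ln 2 \<le> z" "z \<le> b - a - M" using B1 unfolding z_def M_def by linarith+
  have mm: "max a (min b x) = a + max 0 (b - a - M)" unfolding M_def by (cases "b \<le> x"; cases "a \<le> min b x") (auto simp: max_def min_def)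
  have l1: "max 0 (b - a - M) - e * ln 2 \<le> max 0 z" using z1 by (simp add: max_def)
  have l2: "max 0 z \<le> max 0 (b - a - M)" using z1 by (simp add: max_def)
  have B2': "max 0 z \<le> e * ln (1 + exp (z / e))" "e * ln (1 + exp (z / e)) \<le> max 0 z + e * ln 2"
    using B2 unfolding z_def by auto
  have "\<bar>a + e * ln (1 + exp (z / e)) - (a + max 0 (b - a - M))\<bar> \<le> e * ln 2"
    unfolding abs_le_iff using B2' l1 l2 e0 by linarith
  then show ?thesis unfolding F mm z_def .
qed

lemma bound2:
  fixes b e x :: real
  assumes "e > 0"
  shows "\<bar>b - e * ln (1 + exp ((b - x) / e)) - min b x\<bar> \<le> e * ln 2"
proof -
  have m: "min b x = b - max 0 (b - x)" by (cases "b \<le> x") (auto simp: max_def min_def)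
  show ?thesis unfolding m using sp_scaled[OF assms, of "b - x"] assms by (simp add: abs_le_iff)
qed


lemma sup_bound:
  fixes f :: "real \<Rightarrow> real" and P :: "real \<Rightarrow> bool"
  assumes "\<exists>d. P d" "\<And>d. P d \<Longrightarrow> \<bar>f d\<bar> \<le> B"
  shows "0 \<le> Sup {\<bar>f d\<bar> | d. P d} \<and> Sup {\<bar>f d\<bar> | d. P d} \<le> B"
proof -
  obtain d0 where d0: "P d0" using assms(1) by blast
  have ne: "{\<bar>f d\<bar> | d. P d} \<noteq> {}" using d0 by blast
  have bd: "bdd_above {\<bar>f d\<bar> | d. P d}" using assms(2) by (auto simp: bdd_above_def)
  have "\<bar>f d0\<bar> \<le> Sup {\<bar>f d\<bar> | d. P d}" using d0 bd by (intro cSup_upper) auto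
  then have "0 \<le> Sup {\<bar>f d\<bar> | d. P d}" by linarith
  moreover have "Sup {\<bar>f d\<bar> | d. P d} \<le> B" using ne assms(2) by (intro cSup_least) auto
  ultimately show ?thesis by simp
qed

lemma squeeze:
  fixes S :: "real \<Rightarrow> real"
  assumes "\<And>e. e > 0 \<Longrightarrow> 0 \<le> S e \<and> S e \<le> e * ln 2"
  shows "(S \<longlongrightarrow> 0) (at_right 0)"
proof (rule tendsto_sandwich[where f="\<lambda>_. 0" and h="\<lambda>e. e * ln 2"])
  show "\<forall>\<^sub>F n in at_right 0. 0 \<le> S n" using assms eventually_at_right_less[of 0] 
    by (auto elim!: eventually_mono)
  show "\<forall>\<^sub>F n in at_right 0. S n \<le> n * ln 2" using assms eventually_at_right_less[of 0] 
    by (auto elim!: eventually_mono)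
  show "((\<lambda>_. 0::real) \<longlongrightarrow> 0) (at_right 0)" by simp
  have "((\<lambda>e::real. e * ln 2) \<longlongrightarrow> 0 * ln 2) (at_right 0)"
    by (intro tendsto_intros)
  then show "((\<lambda>e::real. e * ln 2) \<longlongrightarrow> 0) (at_right 0)" by simp
qed

theorem proposition1:
  fixes plo pup p0 \<alpha> :: real
  assumes "plo \<le> pup" and "\<alpha> \<noteq> 0"
  defines "p \<equiv> (\<lambda>\<Delta>. proj plo pup (p0 + \<alpha> * \<Delta>))"
      and "pt \<equiv> (\<lambda>\<Delta>. min pup (p0 + \<alpha> * \<Delta>))"
      and "pe \<equiv> (\<lambda>\<epsilon> \<Delta>. plo + \<epsilon> * ln (1 + exp ((pup - plo) / \<epsilon>)
                 / (1 + exp ((pup - p0 - \<alpha> * \<Delta>) / \<epsilon>))))"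
      and "pte \<equiv> (\<lambda>\<epsilon> \<Delta>. pup - \<epsilon> * ln (1 + exp ((pup - p0 - \<alpha> * \<Delta>) / \<epsilon>)))"
  shows "((\<lambda>\<epsilon>. Sup {\<bar>pe \<epsilon> \<Delta> - p \<Delta>\<bar> | \<Delta>. True}) \<longlongrightarrow> 0) (at_right 0)
       \<and> ((\<lambda>\<epsilon>. Sup {\<bar>pte \<epsilon> \<Delta> - pt \<Delta>\<bar> | \<Delta>. \<Delta> \<ge> (plo - p0) / \<alpha>}) \<longlongrightarrow> 0) (at_right 0)"
proof
  show "((\<lambda>\<epsilon>. Sup {\<bar>pe \<epsilon> \<Delta> - p \<Delta>\<bar> | \<Delta>. True}) \<longlongrightarrow> 0) (at_right 0)"
  proof (rule squeeze)
    fix e :: real assume e: "e > 0"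
    have "\<bar>pe e d - p d\<bar> \<le> e * ln 2" for d
      using bound1[OF e, of plo pup "p0 + \<alpha> * d"] unfolding pe_def p_def proj_def
      by (simp add: diff_diff_eq)
    then show "0 \<le> Sup {\<bar>pe e \<Delta> - p \<Delta>\<bar> | \<Delta>. True} \<and> Sup {\<bar>pe e \<Delta> - p \<Delta>\<bar> | \<Delta>. True} \<le> e * ln 2"
      using sup_bound[where f="\<lambda>d. pe e d - p d" and P="\<lambda>_. True" and B="e * ln 2"] by auto
  qed
  show "((\<lambda>\<epsilon>. Sup {\<bar>pte \<epsilon> \<Delta> - pt \<Delta>\<bar> | \<Delta>. \<Delta> \<ge> (plo - p0) / \<alpha>}) \<longlongrightarrow> 0) (at_right 0)"
  proof (rule squeeze)
    fix e :: real assume e: "e > 0"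
    have "\<bar>pte e d - pt d\<bar> \<le> e * ln 2" for d
      using bound2[OF e, of pup "p0 + \<alpha> * d"] unfolding pte_def pt_def
      by (simp add: diff_diff_eq)
    then show "0 \<le> Sup {\<bar>pte e \<Delta> - pt \<Delta>\<bar> | \<Delta>. \<Delta> \<ge> (plo - p0) / \<alpha>} \<and> Sup {\<bar>pte e \<Delta> - pt \<Delta>\<bar> | \<Delta>. \<Delta> \<ge> (plo - p0) / \<alpha>} \<le> e * ln 2"
      using sup_bound[where f="\<lambda>d. pte e d - pt d" and P="\<lambda>d. d \<ge> (plo - p0) / \<alpha>" and B="e * ln 2"] by auto
  qed
qed

end
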